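(* Let $D=(D_1,D_2)\in\mathcal{U}(n,s_1\cdots s_p s_{p+1}\cdots s_{p+q})$ be a U-type design whose first $p$ factors are qualitative and last $q$ factors are quantitative, with rows $x_i=(x_{i1},\dots,x_{i,p+q})$, $i=1,\dots,n$, where the quantitative entries are the transformed values in $[0,1]$. Then the squared qualitative-quantitative discrepancy of $D$ equals $$\mathrm{QQD}^2(D)=C+\frac{1}{n^2}\sum_{i,j=1}^{n}\left(\frac{5}{4}\right)^p\left(\frac{6}{5}\right)^{\delta_{ij}(D_1)}\prod_{k=p+1}^{p+q}\left(\frac{3}{2}-|x_{ik}-x_{jk}|+|x_{ik}-x_{jk}|^2\right),$$ where $C=-\prod_{k=1}^{p}\left(\frac{5s_k+1}{4s_k}\right)\left(\frac{4}{3}\right)^q$ and $\delta_{ij}(D_1)$ is the number of coordinates $k\in\{1,\dots,p\}$ with $x_{ik}=x_{jk}$ (the coincidence number of rows $i$ and $j$ of $D_1$).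
   Context: A U-type design in $\mathcal{U}(n,s_1\cdots s_{p+q})$ is an $n\times(p+q)$ matrix whose $k$th column takes each value in $\{0,1,\dots,s_k-1\}$ equally often. The first $p$ columns ($D_1$) are qualitative factors, the last $q$ columns ($D_2$) quantitative. For the quantitative columns ($k=p+1,\dots,p+q$) a level $x\in\{0,\dots,s_k-1\}$ is transformed to $(2x+1)/(2s_k)\in[0,1]$, and $x_{ik}$ denotes this transformed value. Let $\chi=\chi_1\times\cdots\times\chi_{p+q}$ with $\chi_k=\{0,\dots,s_k-1\}$ for $k\le p$ and $\chi_k=[0,1]$ for $k>p$, and let $F$ be the uniform distribution on $\chi$ (product of discrete uniform distributions on the $\chi_k$, $k\le p$, and Lebesgue measure on $[0,1]$ for $k>p$). Define the kernel $\mathcal{K}(t,z)=\prod_{k=1}^{p+q}\mathcal{K}_k(t_k,z_k)$, where $\mathcal{K}_k(t_k,z_k)=(3/2)^{\delta_{t_kz_k}}(5/4)^{1-\delta_{t_kz_k}}$ for $k\le p$ ($\delta_{tz}=1$ if $t=z$ and $0$ otherwise) and $\mathcal{K}_k(t_k,z_k)=\frac32-|t_k-z_k|+|t_k-z_k|^2$ for $k>p$. The squared qualitative-quantitative discrepancy (QQD) of $D$ with rows $x_1,\dots,x_n$ is $$\mathrm{QQD}^2(D)=\int_{\chi^2}\mathcal{K}(t,z)\,dF(t)\,dF(z)-\frac{2}{n}\sum_{i=1}^n\int_\chi\mathcal{K}(t,x_i)\,dF(t)+\frac{1}{n^2}\sum_{i,j=1}^n\mathcal{K}(x_i,x_j).$$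 *)

theory Defs
  imports "HOL-Probability.Probability"
begin

text \<open>A design with n rows and m columns is a function x with x i k the level
  (in {0..<s k}) of row i (i < n) in column k (k < m).\<close>
definition is_Utype :: "nat \<Rightarrow> nat \<Rightarrow> (nat \<Rightarrow> nat) \<Rightarrow> (nat \<Rightarrow> nat \<Rightarrow> nat) \<Rightarrow> bool" where
  "is_Utype n m s x \<longleftrightarrow>
     (\<forall>k<m. 0 < s k \<and> (\<forall>i<n. x i k < s k) \<and>
            (\<forall>v<s k. card {i. i < n \<and> x i k = v} * s k = n))"

definition design_point :: "nat \<Rightarrow> (nat \<Rightarrow> nat) \<Rightarrow> (nat \<Rightarrow> nat \<Rightarrow> nat) \<Rightarrow> nat \<Rightarrow> (nat \<Rightarrow> real)" where
  "design_point p s x i = (\<lambda>k. if k < p then real (x i k)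
                               else (2 * real (x i k) + 1) / (2 * real (s k)))"

definition qqd_kernel :: "nat \<Rightarrow> nat \<Rightarrow> (nat \<Rightarrow> real) \<Rightarrow> (nat \<Rightarrow> real) \<Rightarrow> real" where
  "qqd_kernel p q t z =
     (\<Prod>k<p+q. if k < p then (if t k = z k then 3/2 else 5/4)
               else 3/2 - \<bar>t k - z k\<bar> + \<bar>t k - z k\<bar>^2)"

definition qqd_measure :: "nat \<Rightarrow> nat \<Rightarrow> (nat \<Rightarrow> nat) \<Rightarrow> (nat \<Rightarrow> real) measure" where
  "qqd_measure p q s =
     PiM {..<p+q} (\<lambda>k. if k < p then uniform_count_measure (real ` {0..<s k})
                       else uniform_measure lborel {0..1::real})"

definition QQD2 :: "nat \<Rightarrow> nat \<Rightarrow> nat \<Rightarrow> (nat \<Rightarrow> nat) \<Rightarrow> (nat \<Rightarrow> nat \<Rightarrow> nat) \<Rightarrow> real" where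
  "QQD2 n p q s x =
     (let F = qqd_measure p q s; K = qqd_kernel p q; X = design_point p s x in
       (\<integral>z. (\<integral>t. K t z \<partial>F) \<partial>F)
       - 2 / real n * (\<Sum>i<n. \<integral>t. K t (X i) \<partial>F)
       + 1 / (real n)^2 * (\<Sum>i<n. \<Sum>j<n. K (X i) (X j)))"

end

theory Submission
  imports Defs
begin

lemma deriv_uabs: "((\<lambda>u::real. u * \<bar>u\<bar>) has_real_derivative 2 * \<bar>x\<bar>) (at x)"
proof (cases "x = 0")
  case True
  have "((\<lambda>y::real. (y * \<bar>y\<bar> - 0 * \<bar>0\<bar>) / (y - 0)) \<longlongrightarrow> 0) (at 0)"
  proof (rule Lim_transform_eventually)
    show "((\<lambda>y::real. \<bar>y\<bar>) \<longlongrightarrow> 0) (at 0)"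
      using tendsto_rabs[OF tendsto_ident_at[of "0::real" UNIV]] by simp
    show "\<forall>\<^sub>F y::real in at 0. \<bar>y\<bar> = (y * \<bar>y\<bar> - 0 * \<bar>0\<bar>) / (y - 0)"
      unfolding eventually_at_filter by (rule always_eventually) simp
  qed
  then show ?thesis using True by (simp add: has_field_derivative_iff)
next
  case False
  show ?thesis
  proof (cases "x > 0")
    case True
    have d: "((\<lambda>u::real. u * u) has_real_derivative 2 * \<bar>x\<bar>) (at x)"
      using True by (auto intro!: derivative_eq_intros)
    show ?thesis
      apply (rule has_field_derivative_transform_within_open[OF d, of "{0<..}"])
      using True by auto
  next
    case False
    with \<open>x \<noteq> 0\<close> have xn: "x < 0" by auto
    have d: "((\<lambda>u::real. - (u * u)) has_real_derivative 2 * \<bar>x\<bar>) (at x)"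
      using xn by (auto intro!: derivative_eq_intros)
    show ?thesis
      apply (rule has_field_derivative_transform_within_open[OF d, of "{..<0}"])
      using xn by auto
  qed
qed

lemma deriv_uabs_c: "((\<lambda>t::real. (t - c) * \<bar>t - c\<bar>) has_real_derivative 2 * \<bar>x - c\<bar>) (at x)"
proof -
  have "((\<lambda>u::real. u * \<bar>u\<bar>) \<circ> (\<lambda>t. t - c) has_real_derivative 2 * \<bar>x - c\<bar> * 1) (at x)"
    by (rule DERIV_chain[OF deriv_uabs]) (auto intro!: derivative_eq_intros)
  then show ?thesis by (simp add: o_def)
qed

definition hq :: "real \<Rightarrow> real" where
  "hq c = 3/2 - ((1 - c) * \<bar>1 - c\<bar> + c * \<bar>c\<bar>) / 2 + ((1 - c)^3 + c^3) / 3"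

lemma ftc_q: "integral\<^sup>L lborel (\<lambda>t. indicator {0..1} t *\<^sub>R (3/2 - \<bar>t - c\<bar> + \<bar>t - c\<bar>^2 :: real)) = hq c"
proof -
  let ?F = "\<lambda>t::real. 3/2 * t - (t - c) * \<bar>t - c\<bar> / 2 + (t - c)^3 / 3"
  have "integral\<^sup>L lborel (\<lambda>t. indicator {0..1} t *\<^sub>R (3/2 - \<bar>t - c\<bar> + \<bar>t - c\<bar>^2 :: real)) = ?F 1 - ?F 0"
  proof (rule integral_FTC_atLeastAtMost)
    fix x :: real
    have d1: "((\<lambda>t::real. 3/2 * t) has_real_derivative 3/2) (at x)"
      by (auto intro!: derivative_eq_intros)
    have d2: "((\<lambda>t::real. (t - c) * \<bar>t - c\<bar> / 2) has_real_derivative 2 * \<bar>x - c\<bar> / 2) (at x)"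
      by (rule DERIV_cdivide[OF deriv_uabs_c])
    have d3: "((\<lambda>t::real. (t - c)^3 / 3) has_real_derivative 3 * (x - c)^2 / 3) (at x)"
      by (auto intro!: derivative_eq_intros)
    have "(?F has_real_derivative (3/2 - 2 * \<bar>x - c\<bar> / 2 + 3 * (x - c)^2 / 3)) (at x)"
      using DERIV_add[OF DERIV_diff[OF d1 d2] d3] by simp
    then have "(?F has_real_derivative (3/2 - \<bar>x - c\<bar> + \<bar>x - c\<bar>^2)) (at x)"
      by simp
    then show "(?F has_vector_derivative (3/2 - \<bar>x - c\<bar> + \<bar>x - c\<bar>^2)) (at x within {0..1})"
      using has_real_derivative_iff_has_vector_derivative has_vector_derivative_at_within by blast
  next
    show "continuous_on {0..1} (\<lambda>x::real. 3/2 - \<bar>x - c\<bar> + \<bar>x - c\<bar>^2)"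
      by (intro continuous_intros)
  qed simp
  also have "\<dots> = hq c" by (simp add: hq_def field_simps)
  finally show ?thesis .
qed

lemma hq_01: "c \<in> {0..1} \<Longrightarrow> hq c = 4/3"
  by (auto simp: hq_def power3_eq_cube field_simps)

lemma unif01: "uniform_measure lborel {0..1::real} = density lborel (\<lambda>x. ennreal (indicator {0..1} x))"
  unfolding uniform_measure_def
  by (intro density_cong) (auto simp: split: split_indicator)

lemma integral_unif01:
  fixes f :: "real \<Rightarrow> real"
  assumes "f \<in> borel_measurable borel"
  shows "integral\<^sup>L (uniform_measure lborel {0..1::real}) f = integral\<^sup>L lborel (\<lambda>x. indicator {0..1} x *\<^sub>R f x)"
  unfolding unif01 using assms by (subst integral_density) auto

lemma integrable_unif01:
  fixes f :: "real \<Rightarrow> real"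
  assumes "continuous_on UNIV f"
  shows "integrable (uniform_measure lborel {0..1::real}) f"
proof -
  have m: "f \<in> borel_measurable borel" using assms by (rule borel_measurable_continuous_onI)
  have "integrable lborel (\<lambda>x. f x * indicator {0..1} x)"
    using assms by (intro borel_integrable_atLeastAtMost) (simp add: continuous_on_eq_continuous_at)
  then show ?thesis unfolding unif01 using m
    by (subst integrable_density) (auto simp: mult.commute)
qed

definition Mk :: "nat \<Rightarrow> (nat \<Rightarrow> nat) \<Rightarrow> nat \<Rightarrow> real measure" where
  "Mk p s k = (if k < p then uniform_count_measure (real ` {0..<s k}) else uniform_measure lborel {0..1::real})"

definition gk :: "nat \<Rightarrow> nat \<Rightarrow> real \<Rightarrow> real \<Rightarrow> real" where
  "gk p k a b = (if k < p then (if a = b then 3/2 else 5/4) else 3/2 - \<bar>a - b\<bar> + \<bar>a - b\<bar>^2)"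

definition Hk :: "nat \<Rightarrow> (nat \<Rightarrow> nat) \<Rightarrow> nat \<Rightarrow> real \<Rightarrow> real" where
  "Hk p s k c = integral\<^sup>L (Mk p s k) (\<lambda>a. gk p k a c)"

definition ek :: "nat \<Rightarrow> (nat \<Rightarrow> nat) \<Rightarrow> nat \<Rightarrow> real" where
  "ek p s k = (if k < p then (5 * real (s k) + 1) / (4 * real (s k)) else 4/3)"

lemma qqd_measure_eq: "qqd_measure p q s = PiM {..<p+q} (Mk p s)"
  unfolding qqd_measure_def Mk_def by simp

lemma qqd_kernel_eq: "qqd_kernel p q t z = (\<Prod>k\<in>{..<p+q}. gk p k (t k) (z k))"
  unfolding qqd_kernel_def gk_def by simp

lemma prob_unif01: "prob_space (uniform_measure lborel {0..1::real})"
  by (rule prob_space_uniform_measure) auto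

lemma prob_Mk: assumes "\<forall>k<p. 0 < s k" shows "prob_space (Mk p s k)"
  using assms by (auto simp: Mk_def prob_unif01 intro!: prob_space_uniform_count_measure)

lemma psf_Mk: assumes "\<forall>k<p. 0 < s k" shows "product_sigma_finite (Mk p s)"
  unfolding product_sigma_finite_def
  using prob_Mk[OF assms] prob_space_imp_sigma_finite by blast

lemma cont_hq: "continuous_on UNIV hq"
  unfolding hq_def by (intro continuous_intros) auto

lemma integrable_g: "integrable (Mk p s k) (\<lambda>a. gk p k a c)"
proof (cases "k < p")
  case True
  then show ?thesis
    by (simp add: Mk_def uniform_count_measure_def integrable_point_measure_finite)
next
  case False
  have "continuous_on UNIV (\<lambda>a::real. 3/2 - \<bar>a - c\<bar> + \<bar>a - c\<bar>^2)"
    by (intro continuous_intros)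
  then show ?thesis using False
    by (simp add: Mk_def gk_def integrable_unif01)
qed

lemma Hk_quant: "\<not> k < p \<Longrightarrow> Hk p s k c = hq c"
proof -
  assume k: "\<not> k < p"
  have "continuous_on UNIV (\<lambda>a::real. 3/2 - \<bar>a - c\<bar> + \<bar>a - c\<bar>^2)"
    by (intro continuous_intros)
  then have m: "(\<lambda>a::real. 3/2 - \<bar>a - c\<bar> + \<bar>a - c\<bar>^2) \<in> borel_measurable borel"
    by (rule borel_measurable_continuous_onI)
  have "Hk p s k c = integral\<^sup>L (uniform_measure lborel {0..1::real}) (\<lambda>a::real. 3/2 - \<bar>a - c\<bar> + \<bar>a - c\<bar>^2)"
    using k unfolding Hk_def Mk_def gk_def by simp
  also have "\<dots> = hq c"
    unfolding integral_unif01[OF m] by (rule ftc_q)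
  finally show ?thesis .
qed

lemma sum_qual:
  assumes "c \<in> real ` {0..<s k}"
  shows "(\<Sum>a\<in>real ` {0..<s k}. (if a = c then 3/2 else 5/4 :: real)) = 5/4 * real (s k) + 1/4"
proof -
  have eq: "\<And>a. (if a = c then 3/2 else 5/4 :: real) = 5/4 + (if a = c then 1/4 else 0)" by simp
  have card: "card (real ` {0..<s k}) = s k"
    by (simp add: card_image inj_on_def)
  show ?thesis
    unfolding eq sum.distrib using assms card by simp
qed

lemma Hk_qual:
  assumes "k < p" "c \<in> real ` {0..<s k}"
  shows "Hk p s k c = ek p s k"
proof -
  have card: "card (real ` {0..<s k}) = s k"
    by (simp add: card_image inj_on_def)
  have "s k > 0" using assms(2) by auto
  then show ?thesis using assms
    by (simp add: Hk_def Mk_def gk_def ek_def integral_uniform_count_measure sum_qual card field_simps)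
qed

lemma integrable_H: "integrable (Mk p s k) (Hk p s k)"
proof (cases "k < p")
  case True
  then show ?thesis
    by (simp add: Mk_def uniform_count_measure_def integrable_point_measure_finite)
next
  case False
  then have "Hk p s k = hq" by (intro ext Hk_quant)
  then show ?thesis using False cont_hq
    by (simp add: Mk_def integrable_unif01)
qed

lemma integral_H:
  assumes "0 < s k"
  shows "integral\<^sup>L (Mk p s k) (Hk p s k) = ek p s k"
proof (cases "k < p")
  case True
  have card: "card (real ` {0..<s k}) = s k"
    by (simp add: card_image inj_on_def)
  have "(\<Sum>c\<in>real ` {0..<s k}. Hk p s k c) = (\<Sum>c\<in>real ` {0..<s k}. ek p s k)"
    using True by (intro sum.cong refl Hk_qual) auto
  then show ?thesis using True assms
    by (simp add: Mk_def integral_uniform_count_measure card)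
next
  case False
  then have H: "Hk p s k = hq" by (intro ext Hk_quant)
  have m: "hq \<in> borel_measurable borel" using cont_hq by (rule borel_measurable_continuous_onI)
  have "integral\<^sup>L lborel (\<lambda>x. indicator {0..1} x *\<^sub>R hq x) = integral\<^sup>L lborel (\<lambda>x::real. indicator {0..1} x *\<^sub>R (4/3::real))"
    by (intro arg_cong[where f="integral\<^sup>L lborel"] ext) (auto simp: hq_01 split: split_indicator)
  also have "\<dots> = 4/3" by simp
  finally show ?thesis using False H
    by (simp add: Mk_def ek_def integral_unif01[OF m])
qed

lemma prod_split_pq: "prod (f::nat \<Rightarrow> real) {..<p+q} = prod f {..<p} * prod f {p..<p+q}"
proof -
  have eq: "{..<p+q} = {..<p} \<union> {p..<p+q}" by auto
  show ?thesis unfolding eq by (rule prod.union_disjoint) auto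
qed

lemma inner_int:
  assumes "\<forall>k<p. 0 < s k"
  shows "integral\<^sup>L (qqd_measure p q s) (\<lambda>t. qqd_kernel p q t z) = (\<Prod>k\<in>{..<p+q}. Hk p s k (z k))"
proof -
  interpret product_sigma_finite "Mk p s" using psf_Mk[OF assms] .
  show ?thesis
    unfolding qqd_measure_eq qqd_kernel_eq Hk_def
    by (rule product_integral_prod[where f="\<lambda>k a. gk p k a (z k)", simplified])
       (auto intro: integrable_g)
qed

lemma outer_int:
  assumes "\<forall>k<p+q. 0 < s k"
  shows "integral\<^sup>L (qqd_measure p q s) (\<lambda>z. integral\<^sup>L (qqd_measure p q s) (\<lambda>t. qqd_kernel p q t z))
         = (\<Prod>k\<in>{..<p+q}. ek p s k)"
proof -
  have a: "\<forall>k<p. 0 < s k" using assms by auto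
  interpret product_sigma_finite "Mk p s" using psf_Mk[OF a] .
  have "integral\<^sup>L (qqd_measure p q s) (\<lambda>z. integral\<^sup>L (qqd_measure p q s) (\<lambda>t. qqd_kernel p q t z))
      = integral\<^sup>L (PiM {..<p+q} (Mk p s)) (\<lambda>z. \<Prod>k\<in>{..<p+q}. Hk p s k (z k))"
    using inner_int[OF a] by (simp add: qqd_measure_eq)
  also have "\<dots> = (\<Prod>k\<in>{..<p+q}. integral\<^sup>L (Mk p s k) (Hk p s k))"
    by (rule product_integral_prod) (auto intro: integrable_H)
  also have "\<dots> = (\<Prod>k\<in>{..<p+q}. ek p s k)"
    using assms by (intro prod.cong refl integral_H) auto
  finally show ?thesis .
qed

lemma prod_ek: "(\<Prod>k\<in>{..<p+q}. ek p s k) = (\<Prod>k<p. (5 * real (s k) + 1) / (4 * real (s k))) * (4/3)^q"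
proof -
  have "(\<Prod>k\<in>{..<p+q}. ek p s k) = (\<Prod>k\<in>{..<p}. ek p s k) * (\<Prod>k\<in>{p..<p+q}. ek p s k)"
    by (rule prod_split_pq)
  also have "(\<Prod>k\<in>{..<p}. ek p s k) = (\<Prod>k<p. (5 * real (s k) + 1) / (4 * real (s k)))"
    by (intro prod.cong) (auto simp: ek_def)
  also have "(\<Prod>k\<in>{p..<p+q}. ek p s k) = (\<Prod>k\<in>{p..<p+q}. 4/3)"
    by (intro prod.cong) (auto simp: ek_def)
  finally show ?thesis by simp
qed

lemma kernel_design:
  "qqd_kernel p q (design_point p s x i) (design_point p s x j) =
     (5/4)^p * (6/5)^(card {k. k < p \<and> x i k = x j k}) *
                (\<Prod>k\<in>{p..<p+q}.
                   3/2 - \<bar>design_point p s x i k - design_point p s x j k\<bar>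
                       + \<bar>design_point p s x i k - design_point p s x j k\<bar>^2)"
proof -
  let ?X = "design_point p s x"
  have "qqd_kernel p q (?X i) (?X j) = (\<Prod>k\<in>{..<p}. gk p k (?X i k) (?X j k)) * (\<Prod>k\<in>{p..<p+q}. gk p k (?X i k) (?X j k))"
    unfolding qqd_kernel_eq by (rule prod_split_pq)
  also have "(\<Prod>k\<in>{p..<p+q}. gk p k (?X i k) (?X j k)) = (\<Prod>k\<in>{p..<p+q}.
                   3/2 - \<bar>?X i k - ?X j k\<bar> + \<bar>?X i k - ?X j k\<bar>^2)"
    by (intro prod.cong) (auto simp: gk_def)
  also have "(\<Prod>k\<in>{..<p}. gk p k (?X i k) (?X j k)) = (\<Prod>k\<in>{..<p}. 5/4 * (if x i k = x j k then 6/5 else 1))"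
    by (intro prod.cong) (auto simp: gk_def design_point_def)
  also have "\<dots> = (5/4)^p * (\<Prod>k\<in>{..<p}. (if x i k = x j k then 6/5 else 1))"
    by (simp only: prod.distrib prod_constant card_lessThan)
  also have "(\<Prod>k\<in>{..<p}. (if x i k = x j k then 6/5 else 1)) = (\<Prod>k\<in>{k\<in>{..<p}. x i k = x j k}. 6/5 :: real)"
    by (rule prod.inter_filter[symmetric]) simp
  also have "\<dots> = (6/5)^(card {k. k < p \<and> x i k = x j k})"
    by (simp add: prod_constant)
  finally show ?thesis by simp
qed

theorem theorem1:
  fixes n p q :: nat and s :: "nat \<Rightarrow> nat" and x :: "nat \<Rightarrow> nat \<Rightarrow> nat"
  assumes "0 < n"
    and "is_Utype n (p + q) s x"
  shows "QQD2 n p q s x =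
           - (\<Prod>k<p. (5 * real (s k) + 1) / (4 * real (s k))) * (4/3)^q
           + 1 / (real n)^2 *
             (\<Sum>i<n. \<Sum>j<n. (5/4)^p * (6/5)^(card {k. k < p \<and> x i k = x j k}) *
                (\<Prod>k\<in>{p..<p+q}.
                   3/2 - \<bar>design_point p s x i k - design_point p s x j k\<bar>
                       + \<bar>design_point p s x i k - design_point p s x j k\<bar>^2))"
proof -
  let ?C = "(\<Prod>k<p. (5 * real (s k) + 1) / (4 * real (s k))) * (4/3)^q"
  let ?X = "design_point p s x"
  have spos: "\<forall>k<p+q. 0 < s k" and xlt: "\<And>i k. i < n \<Longrightarrow> k < p+q \<Longrightarrow> x i k < s k"
    using assms(2) unfolding is_Utype_def by auto
  have a: "\<forall>k<p. 0 < s k" using spos by auto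
  have t1: "integral\<^sup>L (qqd_measure p q s) (\<lambda>z. integral\<^sup>L (qqd_measure p q s) (\<lambda>t. qqd_kernel p q t z)) = ?C"
    using outer_int[OF spos] prod_ek by simp
  have t2i: "integral\<^sup>L (qqd_measure p q s) (\<lambda>t. qqd_kernel p q t (?X i)) = ?C" if i: "i < n" for i
  proof -
    have "(\<Prod>k\<in>{..<p+q}. Hk p s k (?X i k)) = (\<Prod>k\<in>{..<p+q}. ek p s k)"
    proof (intro prod.cong refl)
      fix k assume k: "k \<in> {..<p+q}"
      have xl: "x i k < s k" using xlt[OF i] k by auto
      have sk: "0 < s k" using spos k by auto
      show "Hk p s k (?X i k) = ek p s k"
      proof (cases "k < p")
        case True
        then show ?thesis using xl by (intro Hk_qual) (auto simp: design_point_def)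
      next
        case False
        have "?X i k \<in> {0..1}"
          using False xl sk by (auto simp: design_point_def field_simps)
        then show ?thesis using False by (simp add: Hk_quant hq_01 ek_def)
      qed
    qed
    then show ?thesis using inner_int[OF a] prod_ek by simp
  qed
  have t2: "2 / real n * (\<Sum>i<n. integral\<^sup>L (qqd_measure p q s) (\<lambda>t. qqd_kernel p q t (?X i))) = 2 * ?C"
    using assms(1) by (simp add: t2i)
  show ?thesis
    unfolding QQD2_def Let_def t1 t2 kernel_design by simp
qed

end
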